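(* Let $\lambda$ be an irreducible representation of $S_n$ with $d_\lambda > e^{-\sqrt{n}\log n}\sqrt{n!}$. Then the width and the height of the Young diagram of $\lambda$ are both less than $4\sqrt{n}\log n$.
   Context: Irreps of $S_n$ are indexed by Young diagrams (partitions $\lambda_1\ge\lambda_2\ge\cdots$ of $n$); the width is the length of the first row $\lambda_1$ and the height is the number of rows. $d_\lambda$ is the dimension of the irrep; $\log$ is the natural logarithm. *)

theory Defs
  imports Complex_Main
begin

definition is_partition :: "nat \<Rightarrow> nat list \<Rightarrow> bool" where
  "is_partition n lam \<longleftrightarrow> sorted (rev lam) \<and> (\<forall>x\<in>set lam. 0 < x) \<and> sum_list lam = n"

text \<open>Cells (row i, column j), 0-indexed.\<close>
definition young_cells :: "nat list \<Rightarrow> (nat \<times> nat) set" where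
  "young_cells lam = {(i, j). i < length lam \<and> j < lam ! i}"

definition young_width :: "nat list \<Rightarrow> nat" where
  "young_width lam = (if lam = [] then 0 else hd lam)"

definition young_height :: "nat list \<Rightarrow> nat" where
  "young_height lam = length lam"

definition standard_tableaux :: "nat list \<Rightarrow> (nat \<times> nat \<Rightarrow> nat) set" where
  "standard_tableaux lam = {T.
     bij_betw T (young_cells lam) {1..sum_list lam} \<and>
     (\<forall>c. c \<notin> young_cells lam \<longrightarrow> T c = 0) \<and>
     (\<forall>i j. (i, Suc j) \<in> young_cells lam \<longrightarrow> T (i, j) < T (i, Suc j)) \<and>
     (\<forall>i j. (Suc i, j) \<in> young_cells lam \<longrightarrow> T (i, j) < T (Suc i, j))}"

text \<open>Dimension of the irreducible representation of S_n indexed by lam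
  = number of standard Young tableaux of shape lam.\<close>
definition irrep_dim :: "nat list \<Rightarrow> nat" where
  "irrep_dim lam = card (standard_tableaux lam)"

end

theory Submission
  imports Defs "HOL-Library.FuncSet"
begin

definition dc :: "(nat \<times> nat) set \<Rightarrow> bool" where
  "dc S \<longleftrightarrow> finite S \<and> (\<forall>i j. (Suc i, j) \<in> S \<longrightarrow> (i, j) \<in> S) \<and> (\<forall>i j. (i, Suc j) \<in> S \<longrightarrow> (i, j) \<in> S)"

definition rw :: "(nat \<times> nat) set \<Rightarrow> nat \<Rightarrow> nat" where
  "rw S a = card {j. (a, j) \<in> S}"

definition Dn :: "(nat \<times> nat) set \<Rightarrow> (nat \<times> nat) set" where
  "Dn S = {c \<in> S. dc (S - {c})}"

definition Up :: "(nat \<times> nat) set \<Rightarrow> (nat \<times> nat) set" where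
  "Up S = {c. c \<notin> S \<and> dc (insert c S)}"

lemma downset_nat:
  fixes A :: "nat set"
  assumes "finite A" "\<forall>j. Suc j \<in> A \<longrightarrow> j \<in> A"
  shows "A = {..<card A}"
proof (cases "A = {}")
  case True then show ?thesis by simp
next
  case False
  define M where "M = Max A"
  have MA: "M \<in> A" using False assms(1) M_def by simp
  have "\<forall>d. M - d \<in> A"
  proof
    fix d show "M - d \<in> A"
    proof (induction d)
      case 0 then show ?case using MA by simp
    next
      case (Suc d)
      show ?case
      proof (cases "M - d = 0")
        case True then show ?thesis using Suc by simp
      next
        case False
        then have "M - d = Suc (M - Suc d)" by simp
        then show ?thesis using Suc assms(2) by metis
      qed
    qed
  qed
  then have "{..M} \<subseteq> A" by (metis atMost_iff diff_diff_cancel subsetI)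
  moreover have "A \<subseteq> {..M}" using M_def assms(1) by auto
  ultimately have "A = {..M}" by blast
  then show ?thesis by auto
qed

lemma dc_finite: "dc S \<Longrightarrow> finite S" by (simp add: dc_def)
lemma dc_R: "dc S \<Longrightarrow> (Suc i, j) \<in> S \<Longrightarrow> (i, j) \<in> S" unfolding dc_def by blast
lemma dc_C: "dc S \<Longrightarrow> (i, Suc j) \<in> S \<Longrightarrow> (i, j) \<in> S" unfolding dc_def by blast
lemma dcI: "finite S \<Longrightarrow> (\<And>i j. (Suc i, j) \<in> S \<Longrightarrow> (i, j) \<in> S) \<Longrightarrow> (\<And>i j. (i, Suc j) \<in> S \<Longrightarrow> (i, j) \<in> S) \<Longrightarrow> dc S"
  unfolding dc_def by blast

lemma row_finite: "finite S \<Longrightarrow> finite {j. (a, j) \<in> S}"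
proof -
  assume "finite S"
  then have "finite (snd ` S)" by simp
  moreover have "{j. (a, j) \<in> S} \<subseteq> snd ` S" by force
  ultimately show ?thesis by (rule finite_subset[rotated])
qed

lemma mem_iff: assumes "dc S" shows "(a, b) \<in> S \<longleftrightarrow> b < rw S a"
proof -
  define k where "k = card {j. (a, j) \<in> S}"
  have e: "{j. (a, j) \<in> S} = {..<k}"
    unfolding k_def
  proof (rule downset_nat)
    show "finite {j. (a, j) \<in> S}" by (rule row_finite[OF dc_finite[OF assms]])
    show "\<forall>j. Suc j \<in> {j. (a, j) \<in> S} \<longrightarrow> j \<in> {j. (a, j) \<in> S}"
      by (auto intro!: dc_C[OF assms])
  qed
  have "(a, b) \<in> S \<longleftrightarrow> b \<in> {j. (a, j) \<in> S}" by simp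
  also have "\<dots> \<longleftrightarrow> b < k" unfolding e by simp
  finally show ?thesis unfolding rw_def k_def .
qed

lemma rw_Suc: assumes "dc S" shows "rw S (Suc a) \<le> rw S a"
  unfolding rw_def
  apply (rule card_mono)
  using row_finite[OF dc_finite[OF assms]] by (auto intro!: dc_R[OF assms])

lemma rw_anti: assumes "dc S" "a \<le> a'" shows "rw S a' \<le> rw S a"
  using lift_Suc_antimono_le[of "rw S", OF rw_Suc[OF assms(1)] assms(2)] .

lemma Dn_char: assumes "dc S"
  shows "Dn S = (\<lambda>i. (i, rw S i - 1)) ` {i. rw S (Suc i) < rw S i}"
proof (intro set_eqI iffI)
  fix c assume c: "c \<in> Dn S"
  obtain a b where cab: "c = (a, b)" by fastforce
  have "c \<in> S" and d: "dc (S - {c})" using c by (auto simp: Dn_def)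
  then have b: "b < rw S a" using mem_iff[OF assms] cab by simp
  have "\<not> (Suc b < rw S a)"
  proof
    assume "Suc b < rw S a"
    then have "(a, Suc b) \<in> S - {c}" using mem_iff[OF assms] cab by simp
    then have "(a, b) \<in> S - {c}" by (rule dc_C[OF d])
    then show False using cab by simp
  qed
  then have b2: "b = rw S a - 1" using b by simp
  have "\<not> (b < rw S (Suc a))"
  proof
    assume "b < rw S (Suc a)"
    then have "(Suc a, b) \<in> S - {c}" using mem_iff[OF assms] cab by simp
    then have "(a, b) \<in> S - {c}" by (rule dc_R[OF d])
    then show False using cab by simp
  qed
  then show "c \<in> (\<lambda>i. (i, rw S i - 1)) ` {i. rw S (Suc i) < rw S i}"
    using b b2 cab by force
next
  fix c assume "c \<in> (\<lambda>i. (i, rw S i - 1)) ` {i. rw S (Suc i) < rw S i}"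
  then obtain a where a: "rw S (Suc a) < rw S a" and cab: "c = (a, rw S a - 1)" by blast
  have cS: "c \<in> S" using a cab mem_iff[OF assms] by simp
  have "dc (S - {c})"
    unfolding dc_def
  proof (intro conjI allI impI)
    show "finite (S - {c})" using assms dc_finite by simp
  next
    fix i j assume h: "(Suc i, j) \<in> S - {c}"
    then have "(Suc i, j) \<in> S" by simp
    then have "(i, j) \<in> S" by (rule dc_R[OF assms])
    moreover have "(i, j) \<noteq> c"
    proof
      assume "(i, j) = c"
      then have "i = a" "j = rw S a - 1" using cab by auto
      then show False using h a mem_iff[OF assms] by auto
    qed
    ultimately show "(i, j) \<in> S - {c}" by simp
  next
    fix i j assume h: "(i, Suc j) \<in> S - {c}"
    then have "(i, Suc j) \<in> S" by simp
    then have "(i, j) \<in> S" by (rule dc_C[OF assms])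
    moreover have "(i, j) \<noteq> c"
    proof
      assume "(i, j) = c"
      then have "i = a" "j = rw S a - 1" using cab by auto
      then show False using h a mem_iff[OF assms] by auto
    qed
    ultimately show "(i, j) \<in> S - {c}" by simp
  qed
  then show "c \<in> Dn S" using cS by (simp add: Dn_def)
qed

lemma Up_char: assumes "dc S"
  shows "Up S = (\<lambda>i. (i, rw S i)) ` {i. i = 0 \<or> rw S i < rw S (i - 1)}"
proof (intro set_eqI iffI)
  fix c assume c: "c \<in> Up S"
  obtain a b where cab: "c = (a, b)" by fastforce
  have "c \<notin> S" and d: "dc (insert c S)" using c by (auto simp: Up_def)
  then have b: "rw S a \<le> b" using mem_iff[OF assms] cab by simp
  have b2: "b = rw S a"
  proof (cases b)
    case 0 then show ?thesis using b by simp
  next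
    case (Suc b')
    then have "(a, Suc b') \<in> insert c S" using cab by simp
    then have "(a, b') \<in> insert c S" by (rule dc_C[OF d])
    then have "(a, b') \<in> S" using cab Suc by auto
    then show ?thesis using b Suc mem_iff[OF assms] by simp
  qed
  have "a = 0 \<or> rw S a < rw S (a - 1)"
  proof (cases a)
    case 0 then show ?thesis by simp
  next
    case (Suc a')
    then have "(Suc a', b) \<in> insert c S" using cab by simp
    then have "(a', b) \<in> insert c S" by (rule dc_R[OF d])
    then have "(a', b) \<in> S" using cab Suc by auto
    then show ?thesis using b2 Suc mem_iff[OF assms] by simp
  qed
  then show "c \<in> (\<lambda>i. (i, rw S i)) ` {i. i = 0 \<or> rw S i < rw S (i - 1)}"
    using b2 cab by force
next
  fix c assume "c \<in> (\<lambda>i. (i, rw S i)) ` {i. i = 0 \<or> rw S i < rw S (i - 1)}"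
  then obtain a where a: "a = 0 \<or> rw S a < rw S (a - 1)" and cab: "c = (a, rw S a)" by blast
  have cS: "c \<notin> S" using cab mem_iff[OF assms] by simp
  have "dc (insert c S)"
    unfolding dc_def
  proof (intro conjI allI impI)
    show "finite (insert c S)" using assms dc_finite by simp
  next
    fix i j assume h: "(Suc i, j) \<in> insert c S"
    show "(i, j) \<in> insert c S"
    proof (cases "(Suc i, j) = c")
      case True
      then have "a = Suc i" "j = rw S a" using cab by auto
      then show ?thesis using a mem_iff[OF assms] by auto
    next
      case False then have "(Suc i, j) \<in> S" using h by simp
      then have "(i, j) \<in> S" by (rule dc_R[OF assms])
      then show ?thesis by simp
    qed
  next
    fix i j assume h: "(i, Suc j) \<in> insert c S"
    show "(i, j) \<in> insert c S"
    proof (cases "(i, Suc j) = c")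
      case True
      then have "a = i" "Suc j = rw S a" using cab by auto
      then show ?thesis using mem_iff[OF assms] by auto
    next
      case False then have "(i, Suc j) \<in> S" using h by simp
      then have "(i, j) \<in> S" by (rule dc_C[OF assms])
      then show ?thesis by simp
    qed
  qed
  then show "c \<in> Up S" using cS by (simp add: Up_def)
qed

lemma I_finite: assumes "dc S" shows "finite {i. rw S (Suc i) < rw S i}"
proof -
  have "{i. rw S (Suc i) < rw S i} \<subseteq> fst ` S"
  proof
    fix i assume "i \<in> {i. rw S (Suc i) < rw S i}"
    then have "(i, 0) \<in> S" using mem_iff[OF assms] by simp
    then show "i \<in> fst ` S" by force
  qed
  then show ?thesis using assms dc_finite finite_subset by blast
qed

lemma card_Up_Dn: assumes "dc S" shows "card (Up S) = Suc (card (Dn S))" "finite (Up S)" "finite (Dn S)"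
proof -
  let ?I = "{i. rw S (Suc i) < rw S i}"
  have fI: "finite ?I" by (rule I_finite[OF assms])
  have e: "{i. i = 0 \<or> rw S i < rw S (i - 1)} = insert 0 (Suc ` ?I)"
    apply (rule set_eqI)
    subgoal for x by (cases x) (auto simp: image_iff)
    done
  have i1: "inj (\<lambda>i. (i, rw S i))" by (auto simp: inj_def)
  have i2: "inj (\<lambda>i. (i, rw S i - 1))" by (auto simp: inj_def)
  have cD: "card (Dn S) = card ?I"
    unfolding Dn_char[OF assms] by (rule card_image) (use i2 in \<open>auto simp: inj_on_def\<close>)
  have "card (Up S) = card (insert 0 (Suc ` ?I))"
    unfolding Up_char[OF assms] e by (rule card_image) (use i1 in \<open>auto simp: inj_on_def\<close>)
  also have "\<dots> = Suc (card ?I)" using fI by (simp add: card_image)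
  finally show "card (Up S) = Suc (card (Dn S))" using cD by simp
  show "finite (Up S)" unfolding Up_char[OF assms] e using fI by simp
  show "finite (Dn S)" unfolding Dn_char[OF assms] using fI by simp
qed

definition sytB :: "(nat \<times> nat) set \<Rightarrow> nat set \<Rightarrow> (nat \<times> nat \<Rightarrow> nat) set" where
  "sytB S B = {T. bij_betw T S B \<and> (\<forall>c. c \<notin> S \<longrightarrow> T c = 0) \<and>
     (\<forall>i j. (i, Suc j) \<in> S \<longrightarrow> T (i, j) < T (i, Suc j)) \<and>
     (\<forall>i j. (Suc i, j) \<in> S \<longrightarrow> T (i, j) < T (Suc i, j))}"

definition D :: "(nat \<times> nat) set \<Rightarrow> nat" where
  "D S = card (sytB S {1..card S})"

lemma syt_zero: "T \<in> sytB S B \<Longrightarrow> x \<notin> S \<Longrightarrow> T x = 0"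
  unfolding sytB_def by blast

lemma syt_finite: assumes "finite S" "finite B" shows "finite (sytB S B)"
proof -
  have inj: "inj_on (\<lambda>T. restrict T S) (sytB S B)"
  proof (rule inj_onI)
    fix T1 T2 assume h: "T1 \<in> sytB S B" "T2 \<in> sytB S B" "restrict T1 S = restrict T2 S"
    show "T1 = T2"
    proof
      fix x show "T1 x = T2 x"
      proof (cases "x \<in> S")
        case True then show ?thesis using h(3) by (metis restrict_apply')
      next
        case False then show ?thesis using h(1,2) syt_zero by metis
      qed
    qed
  qed
  have "(\<lambda>T. restrict T S) ` sytB S B \<subseteq> PiE S (\<lambda>_. B)"
    by (auto simp: sytB_def bij_betw_def)
  then have "finite ((\<lambda>T. restrict T S) ` sytB S B)"
    using finite_PiE[of S "\<lambda>_. B"] assms finite_subset by blast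
  then show ?thesis using finite_imageD inj by blast
qed

lemma Dn_corner: assumes "dc S" "c \<in> Dn S" "c = (a, b)"
  shows "(a, Suc b) \<notin> S" "(Suc a, b) \<notin> S" "c \<in> S" "dc (S - {c})"
proof -
  show cS: "c \<in> S" and d: "dc (S - {c})" using assms(2) by (auto simp: Dn_def)
  show "(a, Suc b) \<notin> S"
  proof
    assume "(a, Suc b) \<in> S"
    then have "(a, Suc b) \<in> S - {c}" using assms(3) by simp
    then have "(a, b) \<in> S - {c}" by (rule dc_C[OF d])
    then show False using assms(3) by simp
  qed
  show "(Suc a, b) \<notin> S"
  proof
    assume "(Suc a, b) \<in> S"
    then have "(Suc a, b) \<in> S - {c}" using assms(3) by simp
    then have "(a, b) \<in> S - {c}" by (rule dc_R[OF d])
    then show False using assms(3) by simp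
  qed
qed

lemma rec_card:
  assumes S: "dc S" "S \<noteq> {}" and B: "finite B" "card B = card S"
  shows "card (sytB S B) = (\<Sum>c\<in>Dn S. card (sytB (S - {c}) (B - {Max B})))"
proof -
  define M where "M = Max B"
  have fS: "finite S" using S dc_finite by blast
  have "card S > 0" using fS S(2) by (simp add: card_gt_0_iff)
  then have Bne: "B \<noteq> {}" using B by auto
  have MB: "M \<in> B" using Bne B(1) M_def by simp
  have leM: "\<And>x. x \<in> B \<Longrightarrow> x \<le> M" using B(1) M_def by simp
  define A where "A c = {T \<in> sytB S B. T c = M}" for c
  have U: "sytB S B = (\<Union>c\<in>Dn S. A c)"
  proof (intro set_eqI iffI)
    fix T assume T: "T \<in> sytB S B"
    then have bij: "bij_betw T S B" by (simp add: sytB_def)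
    then obtain c where c: "c \<in> S" "T c = M" using MB by (metis bij_betw_iff_bijections)
    obtain a b where cab: "c = (a, b)" by fastforce
    have "dc (S - {c})"
    proof (rule dcI)
      show "finite (S - {c})" using fS by simp
    next
      fix i j assume h: "(Suc i, j) \<in> S - {c}"
      then have h1: "(Suc i, j) \<in> S" by simp
      then have "(i, j) \<in> S" by (rule dc_R[OF S(1)])
      moreover have "(i, j) \<noteq> c"
      proof
        assume e: "(i, j) = c"
        have "T (i, j) < T (Suc i, j)" using T h1 by (simp add: sytB_def)
        moreover have "T (Suc i, j) \<in> B" using bij h1 by (auto simp: bij_betw_def)
        ultimately show False using leM e c by fastforce
      qed
      ultimately show "(i, j) \<in> S - {c}" by simp
    next
      fix i j assume h: "(i, Suc j) \<in> S - {c}"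
      then have h1: "(i, Suc j) \<in> S" by simp
      then have "(i, j) \<in> S" by (rule dc_C[OF S(1)])
      moreover have "(i, j) \<noteq> c"
      proof
        assume e: "(i, j) = c"
        have "T (i, j) < T (i, Suc j)" using T h1 by (simp add: sytB_def)
        moreover have "T (i, Suc j) \<in> B" using bij h1 by (auto simp: bij_betw_def)
        ultimately show False using leM e c by fastforce
      qed
      ultimately show "(i, j) \<in> S - {c}" by simp
    qed
    then have "c \<in> Dn S" using c by (simp add: Dn_def)
    then show "T \<in> (\<Union>c\<in>Dn S. A c)" using T c by (auto simp: A_def)
  next
    fix T assume "T \<in> (\<Union>c\<in>Dn S. A c)" then show "T \<in> sytB S B" by (auto simp: A_def)
  qed
  have fA: "\<forall>c\<in>Dn S. finite (A c)"
    using syt_finite[OF fS B(1)] by (auto simp: A_def)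
  have disj: "\<forall>c\<in>Dn S. \<forall>c'\<in>Dn S. c \<noteq> c' \<longrightarrow> A c \<inter> A c' = {}"
  proof (intro ballI impI)
    fix c c' assume h: "c \<in> Dn S" "c' \<in> Dn S" "c \<noteq> c'"
    show "A c \<inter> A c' = {}"
    proof (rule ccontr)
      assume "A c \<inter> A c' \<noteq> {}"
      then obtain T where T: "T \<in> sytB S B" "T c = M" "T c' = M" by (auto simp: A_def)
      then have "inj_on T S" by (simp add: sytB_def bij_betw_def)
      moreover have "c \<in> S" "c' \<in> S" using h by (auto simp: Dn_def)
      ultimately show False using T h(3) by (metis inj_onD)
    qed
  qed
  have fD: "finite (Dn S)" using card_Up_Dn(3)[OF S(1)] .
  have "card (sytB S B) = (\<Sum>c\<in>Dn S. card (A c))"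
    unfolding U by (rule card_UN_disjoint[OF fD fA disj])
  also have "\<dots> = (\<Sum>c\<in>Dn S. card (sytB (S - {c}) (B - {M})))"
  proof (rule sum.cong[OF refl])
    fix c assume cD: "c \<in> Dn S"
    obtain a b where cab: "c = (a, b)" by fastforce
    note cor = Dn_corner[OF S(1) cD cab]
    have "bij_betw (\<lambda>T. T(c := 0)) (A c) (sytB (S - {c}) (B - {M}))"
    proof (rule bij_betw_byWitness[where f' = "\<lambda>T. T(c := M)"])
      show "\<forall>T\<in>A c. T(c := 0, c := M) = T" by (auto simp: A_def)
      show "\<forall>T\<in>sytB (S - {c}) (B - {M}). T(c := M, c := 0) = T"
      proof
        fix T assume "T \<in> sytB (S - {c}) (B - {M})"
        then have "T c = 0" by (rule syt_zero) simp
        then show "T(c := M, c := 0) = T" by auto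
      qed
      show "(\<lambda>T. T(c := 0)) ` A c \<subseteq> sytB (S - {c}) (B - {M})"
      proof
        fix T' assume "T' \<in> (\<lambda>T. T(c := 0)) ` A c"
        then obtain T where T: "T \<in> sytB S B" "T c = M" and T': "T' = T(c := 0)"
          by (auto simp: A_def)
        have b1: "bij_betw T (S - {c}) (B - {M})"
        proof -
          have x1: "bij_betw T S B" using T(1) unfolding sytB_def by blast
          have x2: "bij_betw T {c} {M}" using T(2) by simp
          have x3: "{c} \<subseteq> S" using cor(3) by simp
          have x4: "{M} \<subseteq> B" using MB by simp
          show ?thesis using bij_betw_DiffI[OF x1 x2 x3 x4] .
        qed
        have b2: "bij_betw T' (S - {c}) (B - {M})"
        proof -
          have "bij_betw T' (S - {c}) (B - {M}) = bij_betw T (S - {c}) (B - {M})"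
            by (rule bij_betw_cong) (simp add: T')
          then show ?thesis using b1 by simp
        qed
        have z: "\<forall>x. x \<notin> S - {c} \<longrightarrow> T' x = 0" using T T' by (auto simp: sytB_def)
        have m1: "\<forall>i j. (i, Suc j) \<in> S - {c} \<longrightarrow> T' (i, j) < T' (i, Suc j)"
        proof (intro allI impI)
          fix i j assume h: "(i, Suc j) \<in> S - {c}"
          have "(i, j) \<noteq> c" using h cor cab by auto
          then show "T' (i, j) < T' (i, Suc j)" using h T T' by (simp add: sytB_def)
        qed
        have m2: "\<forall>i j. (Suc i, j) \<in> S - {c} \<longrightarrow> T' (i, j) < T' (Suc i, j)"
        proof (intro allI impI)
          fix i j assume h: "(Suc i, j) \<in> S - {c}"
          have "(i, j) \<noteq> c" using h cor cab by auto
          then show "T' (i, j) < T' (Suc i, j)" using h T T' by (simp add: sytB_def)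
        qed
        show "T' \<in> sytB (S - {c}) (B - {M})" using b2 z m1 m2 by (simp add: sytB_def)
      qed
      show "(\<lambda>T. T(c := M)) ` sytB (S - {c}) (B - {M}) \<subseteq> A c"
      proof
        fix T assume "T \<in> (\<lambda>T. T(c := M)) ` sytB (S - {c}) (B - {M})"
        then obtain T' where T': "T' \<in> sytB (S - {c}) (B - {M})" and T: "T = T'(c := M)"
          by auto
        have b1: "bij_betw T (S - {c}) (B - {M})"
        proof -
          have "bij_betw T (S - {c}) (B - {M}) = bij_betw T' (S - {c}) (B - {M})"
            by (rule bij_betw_cong) (simp add: T)
          moreover have "bij_betw T' (S - {c}) (B - {M})" using T'(1) unfolding sytB_def by blast
          ultimately show ?thesis by simp
        qed
        have b2: "bij_betw T {c} {M}" using T by simp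
        have "bij_betw T ((S - {c}) \<union> {c}) ((B - {M}) \<union> {M})"
          by (rule bij_betw_combine[OF b1 b2]) simp
        moreover have "(S - {c}) \<union> {c} = S" "(B - {M}) \<union> {M} = B" using cor MB by auto
        ultimately have b: "bij_betw T S B" by simp
        have z: "\<forall>x. x \<notin> S \<longrightarrow> T x = 0" using T T' cor by (auto simp: sytB_def)
        have vB: "\<And>x. x \<in> S - {c} \<Longrightarrow> T' x \<in> B - {M}"
          using T' by (auto simp: sytB_def bij_betw_def)
        have m1: "\<forall>i j. (i, Suc j) \<in> S \<longrightarrow> T (i, j) < T (i, Suc j)"
        proof (intro allI impI)
          fix i j assume h: "(i, Suc j) \<in> S"
          show "T (i, j) < T (i, Suc j)"
          proof (cases "(i, Suc j) = c")
            case True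
            have "(i, j) \<in> S" using h by (rule dc_C[OF S(1)])
            moreover have "(i, j) \<noteq> c" using True by auto
            ultimately have "T' (i, j) \<in> B - {M}" using vB by simp
            then have "T' (i, j) < M" using leM by fastforce
            then show ?thesis using True T \<open>(i, j) \<noteq> c\<close> by simp
          next
            case False
            have "(i, j) \<noteq> c" using h cor cab by auto
            then show ?thesis using h False T T' by (simp add: sytB_def)
          qed
        qed
        have m2: "\<forall>i j. (Suc i, j) \<in> S \<longrightarrow> T (i, j) < T (Suc i, j)"
        proof (intro allI impI)
          fix i j assume h: "(Suc i, j) \<in> S"
          show "T (i, j) < T (Suc i, j)"
          proof (cases "(Suc i, j) = c")
            case True
            have "(i, j) \<in> S" using h by (rule dc_R[OF S(1)])
            moreover have "(i, j) \<noteq> c" using True by auto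
            ultimately have "T' (i, j) \<in> B - {M}" using vB by simp
            then have "T' (i, j) < M" using leM by fastforce
            then show ?thesis using True T \<open>(i, j) \<noteq> c\<close> by simp
          next
            case False
            have "(i, j) \<noteq> c" using h cor cab by auto
            then show ?thesis using h False T T' by (simp add: sytB_def)
          qed
        qed
        have "T c = M" using T by simp
        then show "T \<in> A c" using b z m1 m2 by (simp add: A_def sytB_def)
      qed
    qed
    then show "card (A c) = card (sytB (S - {c}) (B - {M}))" by (rule bij_betw_same_card)
  qed
  finally show ?thesis unfolding M_def .
qed

lemma syt_inv_aux:
  "\<forall>S B. card S = m \<longrightarrow> dc S \<longrightarrow> finite B \<longrightarrow> card B = card S \<longrightarrow> card (sytB S B) = D S"
proof (induction m)
  case 0
  show ?case
  proof (intro allI impI)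
    fix S :: "(nat \<times> nat) set" and B :: "nat set"
    assume h: "card S = 0" "dc S" "finite B" "card B = card S"
    then have "S = {}" using dc_finite by auto
    moreover have "B = {}" using h by auto
    ultimately show "card (sytB S B) = D S" by (simp add: D_def)
  qed
next
  case (Suc m)
  show ?case
  proof (intro allI impI)
    fix S :: "(nat \<times> nat) set" and B :: "nat set"
    assume h: "card S = Suc m" "dc S" "finite B" "card B = card S"
    have Sne: "S \<noteq> {}" using h by auto
    have key: "card (sytB S B') = (\<Sum>c\<in>Dn S. D (S - {c}))" if B': "finite B'" "card B' = card S" for B'
    proof -
      have "card (sytB S B') = (\<Sum>c\<in>Dn S. card (sytB (S - {c}) (B' - {Max B'})))"
        by (rule rec_card[OF h(2) Sne B'])
      also have "\<dots> = (\<Sum>c\<in>Dn S. D (S - {c}))"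
      proof (rule sum.cong[OF refl])
        fix c assume c: "c \<in> Dn S"
        have cS: "c \<in> S" and dS: "dc (S - {c})" using c by (auto simp: Dn_def)
        have fS: "finite S" using h(2) dc_finite by blast
        have cSc: "card (S - {c}) = m" using cS fS h(1) by simp
        have "B' \<noteq> {}" using B' h(1) by auto
        then have "Max B' \<in> B'" using B'(1) by simp
        then have "card (B' - {Max B'}) = m" using B' h(1) by simp
        then show "card (sytB (S - {c}) (B' - {Max B'})) = D (S - {c})"
          using Suc.IH cSc dS B'(1) by simp
      qed
      finally show ?thesis .
    qed
    have "card (sytB S B) = (\<Sum>c\<in>Dn S. D (S - {c}))" using key h by simp
    also have "\<dots> = card (sytB S {1..card S})" using key[of "{1..card S}"] by simp
    finally show "card (sytB S B) = D S" by (simp add: D_def)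
  qed
qed

lemma syt_inv: "dc S \<Longrightarrow> finite B \<Longrightarrow> card B = card S \<Longrightarrow> card (sytB S B) = D S"
  using syt_inv_aux by blast

lemma D_rec: assumes "dc S" "S \<noteq> {}" shows "D S = (\<Sum>c\<in>Dn S. D (S - {c}))"
proof -
  have "D S = (\<Sum>c\<in>Dn S. card (sytB (S - {c}) ({1..card S} - {Max {1..card S}})))"
    unfolding D_def by (rule rec_card[OF assms]) simp_all
  also have "\<dots> = (\<Sum>c\<in>Dn S. D (S - {c}))"
  proof (rule sum.cong[OF refl])
    fix c assume c: "c \<in> Dn S"
    have cS: "c \<in> S" and dS: "dc (S - {c})" using c by (auto simp: Dn_def)
    have fS: "finite S" using assms dc_finite by blast
    have "card S > 0" using fS assms by (simp add: card_gt_0_iff)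
    then have "Max {1..card S} = card S" by (intro Max_eqI) auto
    moreover have "card S \<in> {1..card S}" using \<open>card S > 0\<close> by simp
    ultimately have "card ({1..card S} - {Max {1..card S}}) = card (S - {c})" using cS fS
      by (simp add: card_Diff_singleton)
    then show "card (sytB (S - {c}) ({1..card S} - {Max {1..card S}})) = D (S - {c})"
      by (rule syt_inv[OF dS, rotated]) simp
  qed
  finally show ?thesis .
qed

lemma D_empty: "D {} = 1"
proof -
  have "sytB {} {} = {\<lambda>_. 0}"
  proof (intro set_eqI iffI)
    fix T assume "T \<in> sytB {} {}"
    then have "\<forall>x. T x = 0" using syt_zero by blast
    then show "T \<in> {\<lambda>_. 0}" by auto
  qed (simp add: sytB_def bij_betw_def)
  then show ?thesis by (simp add: D_def)
qed

lemma dc_Un: assumes "dc A" "dc B" shows "dc (A \<union> B)"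
proof (rule dcI)
  show "finite (A \<union> B)" using assms dc_finite by blast
next
  fix i j assume "(Suc i, j) \<in> A \<union> B"
  then show "(i, j) \<in> A \<union> B" using dc_R[OF assms(1)] dc_R[OF assms(2)] by blast
next
  fix i j assume "(i, Suc j) \<in> A \<union> B"
  then show "(i, j) \<in> A \<union> B" using dc_C[OF assms(1)] dc_C[OF assms(2)] by blast
qed

lemma dc_Int: assumes "dc A" "dc B" shows "dc (A \<inter> B)"
proof (rule dcI)
  show "finite (A \<inter> B)" using assms dc_finite by blast
next
  fix i j assume "(Suc i, j) \<in> A \<inter> B"
  then show "(i, j) \<in> A \<inter> B" using dc_R[OF assms(1)] dc_R[OF assms(2)] by blast
next
  fix i j assume "(i, Suc j) \<in> A \<inter> B"
  then show "(i, j) \<in> A \<inter> B" using dc_C[OF assms(1)] dc_C[OF assms(2)] by blast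
qed

lemma pair_equiv: assumes "dc v"
  shows "(c \<in> Up v \<and> e \<in> Dn (insert c v) \<and> e \<noteq> c) \<longleftrightarrow> (e \<in> Dn v \<and> c \<in> Up (v - {e}) \<and> c \<noteq> e)"
proof
  assume h: "c \<in> Up v \<and> e \<in> Dn (insert c v) \<and> e \<noteq> c"
  then have c1: "c \<notin> v" "dc (insert c v)" and e1: "e \<in> insert c v" "dc (insert c v - {e})"
    by (auto simp: Up_def Dn_def)
  have ev: "e \<in> v" using e1 h by auto
  have "v - {e} = (insert c v - {e}) \<inter> v" by auto
  then have d1: "dc (v - {e})" using dc_Int[OF e1(2) assms] by simp
  have "insert c (v - {e}) = insert c v - {e}" using h by auto
  then have d2: "dc (insert c (v - {e}))" using e1 by simp
  show "e \<in> Dn v \<and> c \<in> Up (v - {e}) \<and> c \<noteq> e"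
    using ev d1 d2 c1 h by (auto simp: Up_def Dn_def)
next
  assume h: "e \<in> Dn v \<and> c \<in> Up (v - {e}) \<and> c \<noteq> e"
  then have e1: "e \<in> v" "dc (v - {e})" and c1: "c \<notin> v - {e}" "dc (insert c (v - {e}))"
    by (auto simp: Up_def Dn_def)
  have cv: "c \<notin> v" using c1 h by auto
  have "insert c v = insert c (v - {e}) \<union> v" by auto
  then have d1: "dc (insert c v)" using dc_Un[OF c1(2) assms] by simp
  have "insert c v - {e} = insert c (v - {e})" using h by auto
  then have d2: "dc (insert c v - {e})" using c1 by simp
  show "c \<in> Up v \<and> e \<in> Dn (insert c v) \<and> e \<noteq> c"
    using cv d1 d2 e1 h by (auto simp: Up_def Dn_def)
qed

lemma updown_aux:
  "\<forall>v. card v = m \<longrightarrow> dc v \<longrightarrow> (\<Sum>c\<in>Up v. D (insert c v)) = Suc (card v) * D v"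
proof (induction m rule: less_induct)
  case (less m)
  show ?case
  proof (intro allI impI)
    fix v :: "(nat \<times> nat) set" assume cv: "card v = m" and dv: "dc v"
    have fv: "finite v" using dv dc_finite by blast
    have fU: "finite (Up v)" and fD: "finite (Dn v)" and cUD: "card (Up v) = Suc (card (Dn v))"
      using card_Up_Dn[OF dv] by auto
    define X where "X = (\<Sum>c\<in>Up v. \<Sum>e\<in>Dn (insert c v) - {c}. D (insert c v - {e}))"
    have s1: "D (insert c v) = D v + (\<Sum>e\<in>Dn (insert c v) - {c}. D (insert c v - {e}))"
      if c: "c \<in> Up v" for c
    proof -
      have cn: "c \<notin> v" and dm: "dc (insert c v)" using c by (auto simp: Up_def)
      have eq: "insert c v - {c} = v" using cn by auto
      have cDn: "c \<in> Dn (insert c v)" using dm dv eq by (simp add: Dn_def)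
      have fDm: "finite (Dn (insert c v))" using card_Up_Dn(3)[OF dm] .
      have "D (insert c v) = (\<Sum>e\<in>Dn (insert c v). D (insert c v - {e}))"
        by (rule D_rec[OF dm]) simp
      also have "\<dots> = D (insert c v - {c}) + (\<Sum>e\<in>Dn (insert c v) - {c}. D (insert c v - {e}))"
        by (rule sum.remove[OF fDm cDn])
      finally show ?thesis using eq by simp
    qed
    have L: "(\<Sum>c\<in>Up v. D (insert c v)) = card (Up v) * D v + X"
      unfolding X_def using s1 by (simp add: sum.distrib)
    define Y where "Y = (\<Sum>e\<in>Dn v. \<Sum>c\<in>Up (v - {e}) - {e}. D (insert c (v - {e})))"
    have XY: "X = Y"
    proof -
      have fP: "\<forall>c\<in>Up v. finite (Dn (insert c v) - {c})"
        using card_Up_Dn(3) by (auto simp: Up_def)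
      have fQ: "\<forall>e\<in>Dn v. finite (Up (v - {e}) - {e})"
        using card_Up_Dn(2) by (auto simp: Dn_def)
      have "X = (\<Sum>(c, e)\<in>(SIGMA c:Up v. Dn (insert c v) - {c}). D (insert c v - {e}))"
        unfolding X_def by (rule sum.Sigma[OF fU fP])
      also have "\<dots> = (\<Sum>(e, c)\<in>(SIGMA e:Dn v. Up (v - {e}) - {e}). D (insert c (v - {e})))"
      proof (rule sum.reindex_bij_witness[where i = prod.swap and j = prod.swap])
        fix a assume "a \<in> (SIGMA c:Up v. Dn (insert c v) - {c})"
        then show "prod.swap a \<in> (SIGMA e:Dn v. Up (v - {e}) - {e})"
          using pair_equiv[OF dv] by (cases a) auto
      next
        fix b assume "b \<in> (SIGMA e:Dn v. Up (v - {e}) - {e})"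
        then show "prod.swap b \<in> (SIGMA c:Up v. Dn (insert c v) - {c})"
          using pair_equiv[OF dv] by (cases b) auto
      next
        fix a assume "a \<in> (SIGMA c:Up v. Dn (insert c v) - {c})"
        then obtain c e where a: "a = (c, e)" "e \<noteq> c" by auto
        then have "insert c v - {e} = insert c (v - {e})" by auto
        then show "(case prod.swap a of (e, c) \<Rightarrow> D (insert c (v - {e}))) =
                   (case a of (c, e) \<Rightarrow> D (insert c v - {e}))" using a by simp
      qed auto
      also have "\<dots> = Y"
        unfolding Y_def by (rule sum.Sigma[OF fD fQ, symmetric])
      finally show ?thesis .
    qed
    have s2: "(\<Sum>c\<in>Up (v - {e}). D (insert c (v - {e}))) = D v + (\<Sum>c\<in>Up (v - {e}) - {e}. D (insert c (v - {e})))"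
      if e: "e \<in> Dn v" for e
    proof -
      have ev: "e \<in> v" and de: "dc (v - {e})" using e by (auto simp: Dn_def)
      have eq: "insert e (v - {e}) = v" using ev by auto
      have eU: "e \<in> Up (v - {e})" using eq dv by (simp add: Up_def)
      have fUe: "finite (Up (v - {e}))" using card_Up_Dn(2)[OF de] .
      show ?thesis using sum.remove[OF fUe eU, of "\<lambda>c. D (insert c (v - {e}))"] eq by simp
    qed
    have s3: "(\<Sum>c\<in>Up (v - {e}). D (insert c (v - {e}))) = m * D (v - {e})"
      if e: "e \<in> Dn v" for e
    proof -
      have ev: "e \<in> v" and de: "dc (v - {e})" using e by (auto simp: Dn_def)
      have c1: "card (v - {e}) < m" and c2: "Suc (card (v - {e})) = m"
      proof -
        have "card (v - {e}) = card v - 1" using ev fv by simp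
        moreover have "card v > 0" using ev fv card_gt_0_iff by blast
        ultimately show "card (v - {e}) < m" "Suc (card (v - {e})) = m" using cv by simp_all
      qed
      then show ?thesis using less.IH[OF c1] de by simp
    qed
    have YD: "Y + card (Dn v) * D v = m * D v"
    proof (cases "v = {}")
      case True
      then have "Dn v = {}" by (simp add: Dn_def)
      then show ?thesis using True cv Y_def by simp
    next
      case False
      have "Y + card (Dn v) * D v = (\<Sum>e\<in>Dn v. \<Sum>c\<in>Up (v - {e}). D (insert c (v - {e})))"
        unfolding Y_def using s2 by (simp add: sum.distrib)
      also have "\<dots> = (\<Sum>e\<in>Dn v. m * D (v - {e}))" using s3 by simp
      also have "\<dots> = m * D v" using D_rec[OF dv False] by (simp add: sum_distrib_left)
      finally show ?thesis .
    qed
    show "(\<Sum>c\<in>Up v. D (insert c v)) = Suc (card v) * D v"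
      using L XY YD cUD cv by (simp add: algebra_simps)
  qed
qed

lemma updown: "dc v \<Longrightarrow> (\<Sum>c\<in>Up v. D (insert c v)) = Suc (card v) * D v"
  using updown_aux by blast

lemma rw_le_card: assumes "dc v" shows "rw v a \<le> card v"
proof -
  have "card {j. (a, j) \<in> v} \<le> card v"
    by (rule card_inj_on_le[where f = "\<lambda>j. (a, j)"]) (auto simp: inj_on_def dc_finite[OF assms])
  then show ?thesis by (simp add: rw_def)
qed

lemma dc_bound: assumes "dc v" "(a, b) \<in> v" shows "a < card v" "b < card v"
proof -
  have b: "b < rw v a" using assms mem_iff by blast
  then show "b < card v" using rw_le_card[OF assms(1), of a] by simp
  have "(\<lambda>i. (i, 0)) ` {..a} \<subseteq> v"
  proof
    fix x assume "x \<in> (\<lambda>i. (i, 0::nat)) ` {..a}"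
    then obtain i where i: "i \<le> a" "x = (i, 0)" by auto
    have "rw v a \<le> rw v i" by (rule rw_anti[OF assms(1) i(1)])
    then have "0 < rw v i" using b by simp
    then show "x \<in> v" using i mem_iff[OF assms(1)] by simp
  qed
  then have "card ((\<lambda>i. (i, 0::nat)) ` {..a}) \<le> card v"
    using card_mono dc_finite[OF assms(1)] by blast
  moreover have "card ((\<lambda>i. (i, 0::nat)) ` {..a}) = Suc a"
    by (subst card_image) (auto simp: inj_on_def)
  ultimately show "a < card v" by simp
qed

definition PP :: "nat \<Rightarrow> (nat \<times> nat) set set" where
  "PP m = {v. dc v \<and> card v = m}"

lemma PP_finite: "finite (PP m)"
proof -
  have "PP m \<subseteq> Pow ({..<m} \<times> {..<m})"
  proof
    fix v assume "v \<in> PP m"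
    then have "dc v" "card v = m" by (auto simp: PP_def)
    then show "v \<in> Pow ({..<m} \<times> {..<m})" using dc_bound by fastforce
  qed
  then show ?thesis by (rule finite_subset) simp
qed

lemma sumsq: "(\<Sum>v\<in>PP m. D v ^ 2) = fact m"
proof (induction m)
  case 0
  have "PP 0 = {{}}"
  proof (intro set_eqI iffI)
    fix v assume "v \<in> PP 0" then show "v \<in> {{}}" using dc_finite by (auto simp: PP_def)
  next
    fix v :: "(nat \<times> nat) set" assume "v \<in> {{}}" then show "v \<in> PP 0" by (simp add: PP_def dc_def)
  qed
  then show ?case by (simp add: D_empty)
next
  case (Suc m)
  have fD: "\<forall>u\<in>PP (Suc m). finite (Dn u)" using card_Up_Dn(3) by (auto simp: PP_def)
  have fU: "\<forall>u\<in>PP m. finite (Up u)" using card_Up_Dn(2) by (auto simp: PP_def)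
  have "(\<Sum>u\<in>PP (Suc m). D u ^ 2) = (\<Sum>u\<in>PP (Suc m). \<Sum>e\<in>Dn u. D u * D (u - {e}))"
  proof (rule sum.cong[OF refl])
    fix u assume u: "u \<in> PP (Suc m)"
    then have du: "dc u" and "card u = Suc m" by (auto simp: PP_def)
    then have "u \<noteq> {}" by auto
    then have "D u = (\<Sum>e\<in>Dn u. D (u - {e}))" by (rule D_rec[OF du])
    then show "D u ^ 2 = (\<Sum>e\<in>Dn u. D u * D (u - {e}))"
      by (simp add: power2_eq_square sum_distrib_left[symmetric])
  qed
  also have "\<dots> = (\<Sum>(u, e)\<in>(SIGMA u:PP (Suc m). Dn u). D u * D (u - {e}))"
    by (rule sum.Sigma[OF PP_finite fD])
  also have "\<dots> = (\<Sum>(v, c)\<in>(SIGMA v:PP m. Up v). D (insert c v) * D v)"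
  proof (rule sum.reindex_bij_witness[where i = "\<lambda>(v, c). (insert c v, c)" and j = "\<lambda>(u, e). (u - {e}, e)"])
    fix a assume a: "a \<in> (SIGMA u:PP (Suc m). Dn u)"
    then obtain u e where ae: "a = (u, e)" "u \<in> PP (Suc m)" "e \<in> Dn u" by auto
    then have eu: "e \<in> u" "dc (u - {e})" and du: "dc u" "card u = Suc m" by (auto simp: Dn_def PP_def)
    have ins: "insert e (u - {e}) = u" using eu by auto
    show "(case (case a of (u, e) \<Rightarrow> (u - {e}, e)) of (v, c) \<Rightarrow> (insert c v, c)) = a"
      using ae ins by simp
    have "card (u - {e}) = m" using eu du dc_finite[OF du(1)] by simp
    moreover have "e \<in> Up (u - {e})" using ins du by (simp add: Up_def)
    ultimately show "(case a of (u, e) \<Rightarrow> (u - {e}, e)) \<in> (SIGMA v:PP m. Up v)"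
      using ae eu by (simp add: PP_def)
    show "(case (case a of (u, e) \<Rightarrow> (u - {e}, e)) of (v, c) \<Rightarrow> D (insert c v) * D v) =
          (case a of (u, e) \<Rightarrow> D u * D (u - {e}))" using ae ins by simp
  next
    fix b assume b: "b \<in> (SIGMA v:PP m. Up v)"
    then obtain v c where bc: "b = (v, c)" "v \<in> PP m" "c \<in> Up v" by auto
    then have cv: "c \<notin> v" "dc (insert c v)" and dv: "dc v" "card v = m" by (auto simp: Up_def PP_def)
    have del: "insert c v - {c} = v" using cv by auto
    show "(case (case b of (v, c) \<Rightarrow> (insert c v, c)) of (u, e) \<Rightarrow> (u - {e}, e)) = b"
      using bc del by simp
    have "card (insert c v) = Suc m" using cv dv dc_finite[OF dv(1)] by simp
    moreover have "c \<in> Dn (insert c v)" using del dv by (simp add: Dn_def)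
    ultimately show "(case b of (v, c) \<Rightarrow> (insert c v, c)) \<in> (SIGMA u:PP (Suc m). Dn u)"
      using bc cv by (simp add: PP_def)
  qed
  also have "\<dots> = (\<Sum>v\<in>PP m. \<Sum>c\<in>Up v. D (insert c v) * D v)"
    by (rule sum.Sigma[OF PP_finite fU, symmetric])
  also have "\<dots> = (\<Sum>v\<in>PP m. Suc m * D v ^ 2)"
  proof (rule sum.cong[OF refl])
    fix v assume "v \<in> PP m"
    then have dv: "dc v" "card v = m" by (auto simp: PP_def)
    have "(\<Sum>c\<in>Up v. D (insert c v) * D v) = (\<Sum>c\<in>Up v. D (insert c v)) * D v"
      by (simp add: sum_distrib_right)
    also have "\<dots> = Suc m * D v * D v" using updown[OF dv(1)] dv(2) by simp
    also have "\<dots> = Suc m * D v ^ 2" by (simp add: power2_eq_square algebra_simps)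
    finally show "(\<Sum>c\<in>Up v. D (insert c v) * D v) = Suc m * D v ^ 2" .
  qed
  also have "\<dots> = Suc m * (\<Sum>v\<in>PP m. D v ^ 2)" by (rule sum_distrib_left[symmetric])
  also have "\<dots> = Suc m * fact m" using Suc.IH by simp
  also have "\<dots> = fact (Suc m)" by simp
  finally show ?case .
qed

lemma D_sq_le: assumes "dc v" shows "D v ^ 2 \<le> fact (card v)"
proof -
  have "v \<in> PP (card v)" using assms by (simp add: PP_def)
  then have "D v ^ 2 \<le> (\<Sum>u\<in>PP (card v). D u ^ 2)"
    by (rule member_le_sum[where f = "\<lambda>u. D u ^ 2"]) (simp_all add: PP_finite)
  then show ?thesis using sumsq by simp
qed

lemma loc_smono:
  assumes "\<forall>j. Suc j < w \<longrightarrow> (f j :: nat) < f (Suc j)" "i < j" "j < w"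
  shows "f i < f j"
  using assms(2,3)
proof (induction j)
  case 0 then show ?case by simp
next
  case (Suc j)
  have a: "f j < f (Suc j)" using assms(1) Suc.prems by simp
  show ?case
  proof (cases "i = j")
    case True then show ?thesis using a by simp
  next
    case False
    then have "f i < f j" using Suc.IH Suc.prems by simp
    then show ?thesis using a by simp
  qed
qed

lemma smono_eq:
  assumes f: "\<forall>j. Suc j < w \<longrightarrow> (f j :: nat) < f (Suc j)"
    and g: "\<forall>j. Suc j < w \<longrightarrow> (g j :: nat) < g (Suc j)"
    and im: "f ` {..<w} = g ` {..<w}" and k: "k < w"
  shows "f k = g k"
proof -
  have sf: "sorted_wrt (<) (map f [0..<w])"
    unfolding sorted_wrt_iff_nth_less using loc_smono[OF f] by simp
  have sg: "sorted_wrt (<) (map g [0..<w])"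
    unfolding sorted_wrt_iff_nth_less using loc_smono[OF g] by simp
  have "set (map g [0..<w]) = set (map f [0..<w])" using im by (simp add: lessThan_atLeast0)
  then have "map g [0..<w] = map f [0..<w]" by (rule strict_sorted_equal[OF sf sg])
  then have "\<forall>x\<in>{0..<w}. g x = f x" by simp
  then show ?thesis using k by simp
qed

definition sh :: "nat \<times> nat \<Rightarrow> nat \<times> nat" where
  "sh p = (Suc (fst p), snd p)"

definition rest :: "(nat \<times> nat) set \<Rightarrow> (nat \<times> nat) set" where
  "rest S = {p. sh p \<in> S}"

lemma sh_inj: "inj sh" by (auto simp: inj_def sh_def)

lemma rest_dc: assumes "dc S" shows "dc (rest S)"
proof (rule dcI)
  have "rest S \<subseteq> (\<lambda>p. (fst p - 1, snd p)) ` S"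
  proof
    fix p assume "p \<in> rest S"
    then have "sh p \<in> S" by (simp add: rest_def)
    moreover have "p = (\<lambda>p. (fst p - 1, snd p)) (sh p)" by (simp add: sh_def)
    ultimately show "p \<in> (\<lambda>p. (fst p - 1, snd p)) ` S" by blast
  qed
  then show "finite (rest S)" using dc_finite[OF assms] finite_subset by blast
next
  fix i j assume "(Suc i, j) \<in> rest S"
  then have "(Suc (Suc i), j) \<in> S" by (simp add: rest_def sh_def)
  then have "(Suc i, j) \<in> S" by (rule dc_R[OF assms])
  then show "(i, j) \<in> rest S" by (simp add: rest_def sh_def)
next
  fix i j assume "(i, Suc j) \<in> rest S"
  then have "(Suc i, Suc j) \<in> S" by (simp add: rest_def sh_def)
  then have "(Suc i, j) \<in> S" by (rule dc_C[OF assms])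
  then show "(i, j) \<in> rest S" by (simp add: rest_def sh_def)
qed

lemma width_bound:
  assumes S: "dc S" and B: "finite B" "card B = card S"
  shows "card (sytB S B) \<le> (card S choose rw S 0) * D (rest S)"
proof -
  define w where "w = rw S 0"
  define R0 where "R0 = (\<lambda>j. (0::nat, j)) ` {..<w}"
  define S' where "S' = rest S"
  have fS: "finite S" using S dc_finite by blast
  have dS': "dc S'" unfolding S'_def by (rule rest_dc[OF S])
  have fS': "finite S'" using dS' dc_finite by blast
  have R0S: "R0 \<subseteq> S" using mem_iff[OF S] by (auto simp: R0_def w_def)
  have shS: "sh ` S' = S - R0"
  proof (intro set_eqI iffI)
    fix x assume "x \<in> sh ` S'"
    then show "x \<in> S - R0" by (auto simp: S'_def rest_def sh_def R0_def)
  next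
    fix x assume x: "x \<in> S - R0"
    obtain a b where ab: "x = (a, b)" by fastforce
    show "x \<in> sh ` S'"
    proof (cases a)
      case 0
      then have "b < w" using x ab mem_iff[OF S] by (simp add: w_def)
      then have False using x ab 0 by (auto simp: R0_def)
      then show ?thesis ..
    next
      case (Suc i)
      then have "x = sh (i, b)" using ab by (simp add: sh_def)
      moreover have "(i, b) \<in> S'" using x ab Suc by (simp add: S'_def rest_def sh_def)
      ultimately show ?thesis by blast
    qed
  qed
  have cR0: "card R0 = w" unfolding R0_def by (subst card_image) (auto simp: inj_on_def)
  have cS: "card S = w + card S'"
  proof -
    have "card (S - R0) = card S - w" using R0S fS cR0 by (simp add: card_Diff_subset finite_subset)
    moreover have "card (sh ` S') = card S'" by (rule card_image[OF inj_on_subset[OF sh_inj]]) simp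
    moreover have "w \<le> card S" using R0S fS cR0 card_mono by metis
    ultimately show ?thesis using shS by simp
  qed
  define Ch where "Ch = {A. A \<subseteq> B \<and> card A = w}"
  define Tgt where "Tgt = (SIGMA A:Ch. sytB S' (B - A))"
  have fCh: "finite Ch" unfolding Ch_def using B(1) by simp
  have cCh: "card Ch = card B choose w" unfolding Ch_def by (rule n_subsets[OF B(1)])
  have fTgt: "finite Tgt" unfolding Tgt_def using fCh syt_finite[OF fS'] B(1) by simp
  have cTgt: "card Tgt = card Ch * D S'"
  proof -
    have "card Tgt = (\<Sum>A\<in>Ch. card (sytB S' (B - A)))"
      unfolding Tgt_def using fCh syt_finite[OF fS'] B(1) by simp
    also have "\<dots> = (\<Sum>A\<in>Ch. D S')"
    proof (rule sum.cong[OF refl])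
      fix A assume "A \<in> Ch"
      then have "A \<subseteq> B" "card A = w" by (auto simp: Ch_def)
      then have "card (B - A) = card S'" using B cS by (simp add: card_Diff_subset finite_subset)
      then show "card (sytB S' (B - A)) = D S'" by (rule syt_inv[OF dS' finite_Diff[OF B(1)]])
    qed
    finally show ?thesis by simp
  qed
  define Phi where "Phi T = (T ` R0, T \<circ> sh)" for T :: "nat \<times> nat \<Rightarrow> nat"
  have mapsto: "Phi T \<in> Tgt" if T: "T \<in> sytB S B" for T
  proof -
    have bT: "bij_betw T S B" using T unfolding sytB_def by blast
    have iT: "inj_on T S" using bT by (simp add: bij_betw_def)
    have TS: "T ` S = B" using bT by (simp add: bij_betw_def)
    have A1: "T ` R0 \<subseteq> B" using R0S TS by blast
    have A2: "card (T ` R0) = w" using cR0 card_image inj_on_subset[OF iT R0S] by metis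
    have b1: "bij_betw sh S' (S - R0)"
      unfolding bij_betw_def using shS inj_on_subset[OF sh_inj] by blast
    have "T ` (S - R0) = T ` S - T ` R0" by (rule inj_on_image_set_diff[OF iT]) (use R0S in auto)
    then have b2: "bij_betw T (S - R0) (B - T ` R0)"
      using bij_betw_subset[OF bT, of "S - R0"] TS by blast
    have b3: "bij_betw (T \<circ> sh) S' (B - T ` R0)" by (rule bij_betw_trans[OF b1 b2])
    have z: "\<forall>c. c \<notin> S' \<longrightarrow> (T \<circ> sh) c = 0"
    proof (intro allI impI)
      fix c assume "c \<notin> S'"
      then have "sh c \<notin> S" by (simp add: S'_def rest_def)
      then show "(T \<circ> sh) c = 0" using syt_zero[OF T] by simp
    qed
    have m1: "\<forall>i j. (i, Suc j) \<in> S' \<longrightarrow> (T \<circ> sh) (i, j) < (T \<circ> sh) (i, Suc j)"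
      using T by (simp add: S'_def rest_def sh_def sytB_def)
    have m2: "\<forall>i j. (Suc i, j) \<in> S' \<longrightarrow> (T \<circ> sh) (i, j) < (T \<circ> sh) (Suc i, j)"
      using T by (simp add: S'_def rest_def sh_def sytB_def)
    have "T \<circ> sh \<in> sytB S' (B - T ` R0)" using b3 z m1 m2 by (simp add: sytB_def)
    moreover have "T ` R0 \<in> Ch" using A1 A2 by (simp add: Ch_def)
    ultimately show ?thesis by (simp add: Phi_def Tgt_def)
  qed
  have inj: "inj_on Phi (sytB S B)"
  proof (rule inj_onI)
    fix T1 T2 assume T1: "T1 \<in> sytB S B" and T2: "T2 \<in> sytB S B" and e: "Phi T1 = Phi T2"
    then have e1: "T1 ` R0 = T2 ` R0" and e2: "T1 \<circ> sh = T2 \<circ> sh" by (auto simp: Phi_def)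
    show "T1 = T2"
    proof
      fix x :: "nat \<times> nat"
      obtain a b where ab: "x = (a, b)" by fastforce
      show "T1 x = T2 x"
      proof (cases a)
        case (Suc i)
        have "(T1 \<circ> sh) (i, b) = (T2 \<circ> sh) (i, b)" using e2 by simp
        then show ?thesis using ab Suc by (simp add: sh_def)
      next
        case 0
        show ?thesis
        proof (cases "b < w")
          case True
          have inc: "\<forall>j. Suc j < w \<longrightarrow> T (0, j) < T (0, Suc j)" if T: "T \<in> sytB S B" for T
          proof (intro allI impI)
            fix j assume "Suc j < w"
            then have "(0, Suc j) \<in> S" using mem_iff[OF S] by (simp add: w_def)
            then show "T (0, j) < T (0, Suc j)" using T unfolding sytB_def by blast
          qed
          have "(\<lambda>j. T1 (0, j)) ` {..<w} = (\<lambda>j. T2 (0, j)) ` {..<w}"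
            using e1 by (simp add: R0_def image_image)
          then have "T1 (0, b) = T2 (0, b)"
            by (rule smono_eq[OF inc[OF T1] inc[OF T2] _ True])
          then show ?thesis using ab 0 by simp
        next
          case False
          then have "x \<notin> S" using ab 0 mem_iff[OF S] by (simp add: w_def)
          then show ?thesis using syt_zero[OF T1] syt_zero[OF T2] by simp
        qed
      qed
    qed
  qed
  have "card (sytB S B) \<le> card Tgt"
    by (rule card_inj_on_le[OF inj _ fTgt]) (use mapsto in blast)
  then show ?thesis using cTgt cCh B(2) by (simp add: w_def S'_def)
qed

lemma pow_fact_le_exp: assumes "(x::real) \<ge> 0" shows "x ^ n / fact n \<le> exp x"
proof -
  have s: "(\<lambda>k. x ^ k / fact k) sums exp x" using exp_converges[of x] by (simp add: divide_inverse mult.commute)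
  have "sum (\<lambda>k. x ^ k / fact k) {n} \<le> suminf (\<lambda>k. x ^ k / fact k)"
    by (rule sum_le_suminf) (use s assms in \<open>auto simp: sums_iff\<close>)
  then show ?thesis using s by (simp add: sums_iff)
qed

lemma ln4: "5/4 \<le> ln (4::real)"
proof -
  have "exp (5/4 :: real) ^ 4 = exp (of_nat 4 * (5/4))" by (rule exp_of_nat_mult[symmetric])
  also have "\<dots> = exp (of_nat 5 * 1)" by simp
  also have "\<dots> = exp 1 ^ 5" by (rule exp_of_nat_mult)
  also have "\<dots> \<le> 3 ^ 5" by (rule power_mono[OF exp_le]) simp
  also have "\<dots> < (4::real) ^ 4" by simp
  finally have "exp (5/4 :: real) < 4" by (rule power_less_imp_less_base) simp
  then have "ln (exp (5/4 :: real)) < ln 4" by (subst ln_less_cancel_iff) simp_all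
  then show ?thesis by simp
qed

lemma ln2: "1/2 < ln (2::real)"
proof -
  have "exp (1/2 :: real) ^ 2 = exp (of_nat 2 * (1/2))" by (rule exp_of_nat_mult[symmetric])
  also have "\<dots> = exp 1" by simp
  also have "\<dots> < (2::real) ^ 2" using exp_le by simp
  finally have "exp (1/2 :: real) < 2" by (rule power_less_imp_less_base) simp
  then have "ln (exp (1/2 :: real)) < ln 2" by (subst ln_less_cancel_iff) simp_all
  then show ?thesis by simp
qed

lemma binom_le: assumes "w \<le> n" shows "real (n choose w) * fact w \<le> real n ^ w"
proof -
  have e: "fact w * fact (n - w) * (n choose w) = (fact n :: nat)" by (rule binomial_fact_lemma[OF assms])
  have "fact n div fact (n - w) = (n choose w) * (fact w :: nat)"
    by (subst e[symmetric]) (simp add: algebra_simps)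
  then have "(n choose w) * (fact w :: nat) \<le> n ^ w" using fact_div_fact_le_pow[OF assms] by simp
  then have "real ((n choose w) * fact w) \<le> real (n ^ w)" by (rule of_nat_mono)
  then show ?thesis by simp
qed

lemma key_bound:
  fixes n w :: nat
  assumes wn: "w \<le> n" and n3: "3 \<le> n" and wt: "4 * sqrt n * ln n \<le> real w"
  shows "real (n choose w) / fact w \<le> exp (- 2 * sqrt n * ln n)"
proof -
  define W where "W = real w"
  have ln1: "1 \<le> ln (real n)"
  proof -
    have "exp 1 \<le> real n" using exp_le n3 by linarith
    then have "ln (exp 1) \<le> ln (real n)" using n3 by (subst ln_le_cancel_iff) simp_all
    then show ?thesis by simp
  qed
  have sq: "sqrt (real n) \<ge> 1" using n3 by simp
  have W4: "4 * sqrt n \<le> W"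
  proof -
    have "4 * sqrt n * 1 \<le> 4 * sqrt n * ln n" by (rule mult_left_mono[OF ln1]) simp
    then show ?thesis using wt W_def by simp
  qed
  have Wpos: "W > 0" using W4 sq by linarith
  have fw: "(fact w :: real) > 0" by simp
  have C1: "real (n choose w) \<le> real n ^ w / fact w"
    using binom_le[OF wn] fw by (simp add: field_simps)
  have F1: "W ^ w / exp W \<le> fact w"
    using pow_fact_le_exp[of W w] Wpos W_def by (simp add: field_simps)
  have F2: "(W ^ w / exp W) ^ 2 \<le> (fact w) ^ 2"
    by (rule power_mono[OF F1]) (use Wpos in simp)
  have "real (n choose w) / fact w \<le> (real n ^ w / fact w) / fact w"
    by (rule divide_right_mono[OF C1]) simp
  also have "\<dots> = real n ^ w / (fact w) ^ 2" by (simp add: power2_eq_square)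
  also have "\<dots> \<le> real n ^ w / (W ^ w / exp W) ^ 2"
    by (rule divide_left_mono[OF F2]) (use Wpos in simp_all)
  also have "\<dots> = exp (W * ln n + 2 * W - 2 * W * ln W)"
  proof -
    have a: "real n ^ w = exp (W * ln n)"
      using n3 W_def exp_of_nat_mult[of w "ln (real n)"] by simp
    have b: "W ^ w = exp (W * ln W)"
      using Wpos W_def exp_of_nat_mult[of w "ln W"] by simp
    have "real n ^ w / (W ^ w / exp W) ^ 2 = exp (W * ln n) * exp W ^ 2 / exp (W * ln W) ^ 2"
      by (simp add: a b power_divide)
    also have "\<dots> = exp (W * ln n + 2 * W - 2 * W * ln W)"
      by (simp add: exp_add exp_diff exp_of_nat_mult[symmetric] algebra_simps)
    finally show ?thesis .
  qed
  also have "\<dots> \<le> exp (- 2 * sqrt n * ln n)"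
  proof -
    have l1: "ln (4 * sqrt n) \<le> ln W" using W4 sq Wpos by (subst ln_le_cancel_iff) simp_all
    have l2: "ln (4 * sqrt (real n)) = ln 4 + ln n / 2" using sq by (simp add: ln_mult ln_sqrt)
    have h1: "W * (ln 4 + ln n / 2) \<le> W * ln W" using l1 l2 Wpos by (intro mult_left_mono) simp_all
    have h2: "W * (5/4) \<le> W * ln 4" using ln4 Wpos by (intro mult_left_mono) simp_all
    have h3: "W * ln n + 2 * W - 2 * W * ln W \<le> - W / 2" using h1 h2 by (simp add: algebra_simps)
    have "- W / 2 \<le> - 2 * sqrt n * ln n" using wt W_def by simp
    then show ?thesis using h3 by simp
  qed
  finally show ?thesis .
qed

lemma analytic:
  fixes n w :: nat and d :: real
  assumes wn: "w \<le> n" and dsq: "d ^ 2 \<le> fact n * real (n choose w) / fact w"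
    and dgt: "d > exp (- sqrt (real n) * ln (real n)) * sqrt (fact n)"
  shows "real w < 4 * sqrt (real n) * ln (real n)"
proof (rule ccontr)
  assume "\<not> ?thesis"
  then have wt: "4 * sqrt (real n) * ln (real n) \<le> real w" by simp
  define E where "E = exp (- sqrt (real n) * ln (real n))"
  have E0: "0 \<le> E * sqrt (fact n)" by (simp add: E_def)
  have "(E * sqrt (fact n)) ^ 2 < d ^ 2"
    by (rule power_strict_mono) (use dgt E0 E_def in simp_all)
  moreover have "(E * sqrt (fact n)) ^ 2 = exp (- 2 * sqrt n * ln n) * fact n"
  proof -
    have "E ^ 2 = exp (- 2 * sqrt n * ln n)"
      unfolding E_def by (simp add: exp_of_nat_mult[symmetric])
    then show ?thesis by (simp add: power_mult_distrib)
  qed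
  ultimately have "exp (- 2 * sqrt n * ln n) * fact n < fact n * real (n choose w) / fact w"
    using dsq by simp
  then have lt: "exp (- 2 * sqrt n * ln n) < real (n choose w) / fact w"
    by (simp add: field_simps)
  show False
  proof (cases "n \<ge> 3")
    case True
    then show False using key_bound[OF wn True wt] lt by simp
  next
    case False
    then have "n = 0 \<or> n = 1 \<or> n = 2" by auto
    then show False
    proof (elim disjE)
      assume "n = 0" then show False using lt wn by simp
    next
      assume n1: "n = 1"
      then have "w = 0 \<or> w = 1" using wn by auto
      then show False using lt n1 by auto
    next
      assume n2: "n = 2"
      have "1 < sqrt (2::real)" by simp
      moreover have "0 < ln (2::real)" using ln2 by linarith
      ultimately have "(4 * 1) * ln 2 < (4 * sqrt (2::real)) * ln 2"
        by (intro mult_strict_right_mono) simp_all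
      then have "2 < 4 * sqrt (2::real) * ln 2" using ln2 by linarith
      moreover have "real w \<le> 2" using wn n2 by simp
      moreover have "4 * sqrt (2::real) * ln 2 \<le> real w" using wt n2 by simp
      ultimately show False by linarith
    qed
  qed
qed

lemma card_rest: assumes S: "dc S" shows "card S = rw S 0 + card (rest S)"
proof -
  define w where "w = rw S 0"
  define R0 where "R0 = (\<lambda>j. (0::nat, j)) ` {..<w}"
  define S' where "S' = rest S"
  have fS: "finite S" using S dc_finite by blast
  have R0S: "R0 \<subseteq> S" using mem_iff[OF S] by (auto simp: R0_def w_def)
  have shS: "sh ` S' = S - R0"
  proof (intro set_eqI iffI)
    fix x assume "x \<in> sh ` S'"
    then show "x \<in> S - R0" by (auto simp: S'_def rest_def sh_def R0_def)
  next
    fix x assume x: "x \<in> S - R0"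
    obtain a b where ab: "x = (a, b)" by fastforce
    show "x \<in> sh ` S'"
    proof (cases a)
      case 0
      then have "b < w" using x ab mem_iff[OF S] by (simp add: w_def)
      then have False using x ab 0 by (auto simp: R0_def)
      then show ?thesis ..
    next
      case (Suc i)
      then have "x = sh (i, b)" using ab by (simp add: sh_def)
      moreover have "(i, b) \<in> S'" using x ab Suc by (simp add: S'_def rest_def sh_def)
      ultimately show ?thesis by blast
    qed
  qed
  have cR0: "card R0 = w" unfolding R0_def by (subst card_image) (auto simp: inj_on_def)
  have "card (S - R0) = card S - w" using R0S fS cR0 by (simp add: card_Diff_subset finite_subset)
  moreover have "card (sh ` S') = card S'" by (rule card_image[OF inj_on_subset[OF sh_inj]]) simp
  moreover have "w \<le> card S" using R0S fS cR0 card_mono by metis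
  ultimately show ?thesis using shS by (simp add: w_def S'_def)
qed

lemma main_bound:
  assumes S: "dc S"
  shows "real (D S) ^ 2 \<le> fact (card S) * real (card S choose rw S 0) / fact (rw S 0)"
    "rw S 0 \<le> card S"
proof -
  define n where "n = card S"
  define w where "w = rw S 0"
  have cr: "n = w + card (rest S)" using card_rest[OF S] by (simp add: n_def w_def)
  then show wn: "rw S 0 \<le> card S" by (simp add: n_def w_def)
  have d1: "D S \<le> (n choose w) * D (rest S)"
    using width_bound[OF S, of "{1..card S}"] by (simp add: D_def n_def w_def)
  have d2: "D (rest S) ^ 2 \<le> fact (n - w)" using D_sq_le[OF rest_dc[OF S]] cr by simp
  have "real (D S) ^ 2 \<le> (real (n choose w) * real (D (rest S))) ^ 2"
    by (rule power_mono) (use d1 in \<open>simp_all add: of_nat_mult[symmetric] del: of_nat_mult\<close>)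
  also have "\<dots> = real (n choose w) ^ 2 * real (D (rest S) ^ 2)" by (simp add: power_mult_distrib)
  also have "\<dots> \<le> real (n choose w) ^ 2 * fact (n - w)"
  proof (rule mult_left_mono)
    show "real (D (rest S) ^ 2) \<le> fact (n - w)" using d2
      by (metis of_nat_fact of_nat_le_iff)
  qed simp
  also have "\<dots> = fact n * real (n choose w) / fact w"
  proof -
    have e: "fact w * fact (n - w) * (n choose w) = (fact n :: nat)"
      by (rule binomial_fact_lemma) (use cr in simp)
    then have "(fact w :: real) * fact (n - w) * real (n choose w) = fact n"
      by (metis of_nat_fact of_nat_mult)
    then show ?thesis by (simp add: field_simps power2_eq_square)
  qed
  finally show "real (D S) ^ 2 \<le> fact (card S) * real (card S choose rw S 0) / fact (rw S 0)"
    by (simp add: n_def w_def)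
qed

definition tr :: "(nat \<times> nat) set \<Rightarrow> (nat \<times> nat) set" where
  "tr S = prod.swap ` S"

lemma mem_tr: "(a, b) \<in> tr S \<longleftrightarrow> (b, a) \<in> S"
  unfolding tr_def by force

lemma tr_tr: "tr (tr S) = S" unfolding tr_def by (simp add: image_image)

lemma tr_dc: assumes "dc S" shows "dc (tr S)"
proof (rule dcI)
  show "finite (tr S)" unfolding tr_def using dc_finite[OF assms] by simp
next
  fix i j assume "(Suc i, j) \<in> tr S"
  then have "(j, Suc i) \<in> S" by (simp add: mem_tr)
  then have "(j, i) \<in> S" by (rule dc_C[OF assms])
  then show "(i, j) \<in> tr S" by (simp add: mem_tr)
next
  fix i j assume "(i, Suc j) \<in> tr S"
  then have "(Suc j, i) \<in> S" by (simp add: mem_tr)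
  then have "(j, i) \<in> S" by (rule dc_R[OF assms])
  then show "(i, j) \<in> tr S" by (simp add: mem_tr)
qed

lemma card_tr: "card (tr S) = card S"
  unfolding tr_def by (rule card_image) (auto simp: inj_on_def)

lemma syt_tr_into: assumes "T \<in> sytB S B" shows "T \<circ> prod.swap \<in> sytB (tr S) B"
proof -
  have bT: "bij_betw T S B" using assms unfolding sytB_def by blast
  have bs: "bij_betw prod.swap (tr S) S"
    unfolding tr_def bij_betw_def by (auto simp: inj_on_def image_image)
  have b: "bij_betw (T \<circ> prod.swap) (tr S) B" by (rule bij_betw_trans[OF bs bT])
  have z: "\<forall>c. c \<notin> tr S \<longrightarrow> (T \<circ> prod.swap) c = 0"
  proof (intro allI impI)
    fix c :: "nat \<times> nat" assume "c \<notin> tr S"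
    then have "prod.swap c \<notin> S" by (cases c) (simp add: mem_tr)
    then show "(T \<circ> prod.swap) c = 0" using syt_zero[OF assms] by simp
  qed
  have m1: "\<forall>i j. (i, Suc j) \<in> tr S \<longrightarrow> (T \<circ> prod.swap) (i, j) < (T \<circ> prod.swap) (i, Suc j)"
    using assms by (simp add: mem_tr sytB_def)
  have m2: "\<forall>i j. (Suc i, j) \<in> tr S \<longrightarrow> (T \<circ> prod.swap) (i, j) < (T \<circ> prod.swap) (Suc i, j)"
    using assms by (simp add: mem_tr sytB_def)
  show ?thesis using b z m1 m2 by (simp add: sytB_def)
qed

lemma D_tr: "D (tr S) = D S"
proof -
  have "bij_betw (\<lambda>T. T \<circ> prod.swap) (sytB S {1..card S}) (sytB (tr S) {1..card S})"
  proof (rule bij_betw_byWitness[where f' = "\<lambda>T. T \<circ> prod.swap"])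
    show "\<forall>a\<in>sytB S {1..card S}. a \<circ> prod.swap \<circ> prod.swap = a" by (auto simp: o_def)
    show "\<forall>a\<in>sytB (tr S) {1..card S}. a \<circ> prod.swap \<circ> prod.swap = a" by (auto simp: o_def)
    show "(\<lambda>T. T \<circ> prod.swap) ` sytB S {1..card S} \<subseteq> sytB (tr S) {1..card S}"
      using syt_tr_into by blast
    show "(\<lambda>T. T \<circ> prod.swap) ` sytB (tr S) {1..card S} \<subseteq> sytB S {1..card S}"
      using syt_tr_into[of _ "tr S"] tr_tr by fastforce
  qed
  then show ?thesis unfolding D_def card_tr by (rule bij_betw_same_card[symmetric])
qed

lemma young_eq: "young_cells lam = (SIGMA i:{..<length lam}. {..<lam ! i})"
  by (auto simp: young_cells_def)

lemma young_dc: assumes "is_partition n lam" shows "dc (young_cells lam)"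
proof (rule dcI)
  show "finite (young_cells lam)" unfolding young_eq by simp
next
  fix i j assume h: "(Suc i, j) \<in> young_cells lam"
  have s: "sorted_wrt (\<lambda>x y. y \<le> x) lam"
    using assms by (simp add: is_partition_def sorted_wrt_rev)
  have "lam ! Suc i \<le> lam ! i"
    using sorted_wrt_nth_less[OF s, of i "Suc i"] h by (simp add: young_cells_def)
  then show "(i, j) \<in> young_cells lam" using h by (simp add: young_cells_def)
next
  fix i j assume "(i, Suc j) \<in> young_cells lam"
  then show "(i, j) \<in> young_cells lam" by (simp add: young_cells_def)
qed

lemma young_card: "card (young_cells lam) = sum_list lam"
  unfolding young_eq by (simp add: sum_list_sum_nth atLeast0LessThan)

lemma young_D: "irrep_dim lam = D (young_cells lam)"
  unfolding irrep_dim_def standard_tableaux_def D_def sytB_def young_card ..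

lemma young_w: "rw (young_cells lam) 0 = young_width lam"
proof (cases lam)
  case Nil then show ?thesis by (simp add: rw_def young_cells_def young_width_def)
next
  case (Cons x xs)
  then have "{j. (0, j) \<in> young_cells lam} = {..<x}" by (auto simp: young_cells_def)
  then show ?thesis using Cons by (simp add: rw_def young_width_def)
qed

lemma young_h: assumes "is_partition n lam" shows "rw (tr (young_cells lam)) 0 = young_height lam"
proof -
  have "{j. (0, j) \<in> tr (young_cells lam)} = {..<length lam}"
  proof (intro set_eqI iffI)
    fix j assume "j \<in> {j. (0, j) \<in> tr (young_cells lam)}"
    then show "j \<in> {..<length lam}" by (simp add: mem_tr young_cells_def)
  next
    fix j assume j: "j \<in> {..<length lam}"
    then have "lam ! j \<in> set lam" by simp
    then have "0 < lam ! j" using assms by (simp add: is_partition_def)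
    then show "j \<in> {j. (0, j) \<in> tr (young_cells lam)}" using j by (simp add: mem_tr young_cells_def)
  qed
  then show ?thesis by (simp add: rw_def young_height_def)
qed

theorem lemma5:
  fixes n :: nat and lam :: "nat list"
  assumes "is_partition n lam"
    and "real (irrep_dim lam) > exp (- sqrt (real n) * ln (real n)) * sqrt (fact n)"
  shows "real (young_width lam) < 4 * sqrt (real n) * ln (real n)
       \<and> real (young_height lam) < 4 * sqrt (real n) * ln (real n)"
proof -
  define Y where "Y = young_cells lam"
  have dY: "dc Y" unfolding Y_def by (rule young_dc[OF assms(1)])
  have cY: "card Y = n" using assms(1) unfolding Y_def young_card by (simp add: is_partition_def)
  have hyp: "real (D Y) > exp (- sqrt (real n) * ln (real n)) * sqrt (fact n)"
    using assms(2) by (simp add: young_D Y_def)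
  have w: "real (young_width lam) < 4 * sqrt (real n) * ln (real n)"
  proof -
    have "real (rw Y 0) < 4 * sqrt (real n) * ln (real n)"
      by (rule analytic[OF _ _ hyp]) (use main_bound[OF dY] cY in simp_all)
    then show ?thesis by (simp add: Y_def young_w)
  qed
  have h: "real (young_height lam) < 4 * sqrt (real n) * ln (real n)"
  proof -
    have dT: "dc (tr Y)" by (rule tr_dc[OF dY])
    have cT: "card (tr Y) = n" using cY card_tr by simp
    have hyp': "real (D (tr Y)) > exp (- sqrt (real n) * ln (real n)) * sqrt (fact n)"
      using hyp D_tr by simp
    have "real (rw (tr Y) 0) < 4 * sqrt (real n) * ln (real n)"
      by (rule analytic[OF _ _ hyp']) (use main_bound[OF dT] cT in simp_all)
    then show ?thesis using young_h[OF assms(1)] by (simp add: Y_def)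
  qed
  show ?thesis using w h by simp
qed


end
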